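(* Let $\varphi:[1,\infty]\to[1,\infty]$ be an admissible function, with constants $\gamma,\beta>0$ as in the definition below. Then for every $x\in\mathbb R$ and every $1\le q_0<\infty$, $$ \inf_{q\in[q_0,\infty)}\varphi(q)e^{-\frac{x}{q}}\le \begin{cases} \varphi(q_0)e^{-\frac{x}{q_0}}, & \text{if } x\ge 0,\\[2pt] q_0^{\beta}e^{\frac{1}{q_0}}\varphi(1-x), & \text{if } x<0. \end{cases} $$
   Context: A function $\varphi:[1,\infty]\to[1,\infty]$ is called admissible if (a) $\varphi(1)=1$ and $\varphi$ is log-concave, i.e. $\theta\log\varphi(x)+(1-\theta)\log\varphi(y)\le\log\varphi(\theta x+(1-\theta)y)$ for all $x,y\ge1$, $0\le\theta\le1$; and (b) there exist $\gamma,\beta>0$ such that for every $x\ge1$, $\frac{\gamma}{x}\le\frac{\varphi'(x)}{\varphi(x)}\le\frac{\beta}{x}$. *)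

theory Defs
  imports "HOL-Analysis.Analysis"
begin

text \<open>Admissible function with constants gamma, beta. The value at infinity is
irrelevant for the statement, so phi is modelled on [1, infinity) as a real function.\<close>
definition admissible :: "(real \<Rightarrow> real) \<Rightarrow> real \<Rightarrow> real \<Rightarrow> bool" where
  "admissible \<phi> \<gamma> \<beta> \<longleftrightarrow>
     \<gamma> > 0 \<and> \<beta> > 0 \<and> \<phi> 1 = 1 \<and> (\<forall>x\<ge>1. \<phi> x \<ge> 1) \<and>
     (\<forall>x y \<theta>. x \<ge> 1 \<longrightarrow> y \<ge> 1 \<longrightarrow> 0 \<le> \<theta> \<longrightarrow> \<theta> \<le> 1 \<longrightarrow>
        \<theta> * ln (\<phi> x) + (1 - \<theta>) * ln (\<phi> y) \<le> ln (\<phi> (\<theta> * x + (1 - \<theta>) * y))) \<and>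
     (\<exists>\<phi>'. \<forall>x\<ge>1. (\<phi> has_real_derivative \<phi>' x) (at x within {1..}) \<and>
        \<gamma> / x \<le> \<phi>' x / \<phi> x \<and> \<phi>' x / \<phi> x \<le> \<beta> / x)"

end

theory Submission
  imports Defs
begin

lemma ge1_mult: fixes c t :: real shows "1 \<le> c \<Longrightarrow> 1 \<le> t \<Longrightarrow> 1 \<le> c * t"
  using mult_mono[of 1 c 1 t] by simp

lemma phi_scale:
  fixes \<phi> \<phi>' :: "real \<Rightarrow> real" and \<beta> c t :: real
  assumes pos: "\<forall>x\<ge>1. \<phi> x \<ge> 1"
    and der: "\<forall>x\<ge>1. (\<phi> has_real_derivative \<phi>' x) (at x within {1..}) \<and> \<phi>' x / \<phi> x \<le> \<beta> / x"
    and c: "1 \<le> c" and t: "1 \<le> t"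
  shows "\<phi> (c * t) \<le> c powr \<beta> * \<phi> t"
proof -
  define g where "g s = \<beta> * ln s - ln (\<phi> s)" for s
  have gd: "(g has_real_derivative (\<beta> / s - \<phi>' s / \<phi> s)) (at s within {1..})" if "s \<ge> 1" for s
  proof -
    have "(\<phi> has_real_derivative \<phi>' s) (at s within {1..})" by (rule conjunct1[OF der[rule_format, OF that]])
    moreover have "\<phi> s > 0" using pos that by force
    moreover have "s > 0" using that by simp
    ultimately have "((\<lambda>s. \<beta> * ln s - ln (\<phi> s)) has_real_derivative (\<beta> / s - \<phi>' s / \<phi> s)) (at s within {1..})"
      apply -
      apply (rule derivative_eq_intros refl | assumption)+
      apply (simp add: field_simps)
      done
    thus ?thesis unfolding g_def[abs_def] .
  qed
  have cont: "continuous_on {1..} g"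
    unfolding continuous_on_eq_continuous_within
  proof
    fix s :: real assume "s \<in> {1..}"
    hence "(g has_real_derivative (\<beta> / s - \<phi>' s / \<phi> s)) (at s within {1..})" using gd by simp
    thus "continuous (at s within {1..}) g" by (rule DERIV_continuous)
  qed
  have ct: "c * t \<ge> 1" using c t by (rule ge1_mult)
  have "g t \<le> g (c * t)"
  proof (rule DERIV_nonneg_imp_increasing_open[of t "c * t" g])
    show "t \<le> c * t" using c t by (simp add: mult_le_cancel_right1)
    show "continuous_on {t..c*t} g" using t by (intro continuous_on_subset[OF cont]) auto
    fix s assume s: "t < s" "s < c * t"
    hence s1: "s > 1" using t by simp
    have "(g has_real_derivative (\<beta> / s - \<phi>' s / \<phi> s)) (at s within {1<..})"
      by (rule has_field_derivative_subset[OF gd]) (use s1 in auto)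
    hence "(g has_real_derivative (\<beta> / s - \<phi>' s / \<phi> s)) (at s)"
      using at_within_open[of s "{1<..}"] s1 by (metis greaterThan_iff open_greaterThan)
    moreover have "\<phi>' s / \<phi> s \<le> \<beta> / s" by (rule conjunct2[OF der[rule_format, OF less_imp_le[OF s1]]])
    hence "\<beta> / s - \<phi>' s / \<phi> s \<ge> 0" by simp
    ultimately show "\<exists>y. (g has_real_derivative y) (at s) \<and> y \<ge> 0" by blast
  qed
  hence h: "ln (\<phi> (c*t)) \<le> \<beta> * ln (c*t) - \<beta> * ln t + ln (\<phi> t)" unfolding g_def by simp
  have p1: "\<phi> (c*t) > 0" using pos ct by force
  have p2: "\<phi> t > 0" using pos t by force
  have "\<beta> * ln (c*t) - \<beta> * ln t = \<beta> * ln c" using c t by (simp add: ln_mult distrib_left)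
  moreover have "ln (c powr \<beta> * \<phi> t) = \<beta> * ln c + ln (\<phi> t)" using c p2 by (simp add: ln_mult ln_powr)
  ultimately have "ln (\<phi> (c*t)) \<le> ln (c powr \<beta> * \<phi> t)" using h by linarith
  moreover have "c powr \<beta> * \<phi> t > 0" using c p2 by simp
  ultimately show ?thesis using p1 by simp
qed

theorem mainTheorem1:
  fixes \<phi> :: "real \<Rightarrow> real" and \<gamma> \<beta> x q\<^sub>0 :: real
  assumes "admissible \<phi> \<gamma> \<beta>" and "1 \<le> q\<^sub>0"
  shows "Inf ((\<lambda>q. \<phi> q * exp (- x / q)) ` {q\<^sub>0..}) \<le>
           (if x \<ge> 0 then \<phi> q\<^sub>0 * exp (- x / q\<^sub>0)
            else q\<^sub>0 powr \<beta> * exp (1 / q\<^sub>0) * \<phi> (1 - x))"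
proof -
  have pos: "\<forall>x\<ge>1. \<phi> x \<ge> 1" using assms(1) unfolding admissible_def by blast
  obtain \<phi>' where der: "\<forall>x\<ge>1. (\<phi> has_real_derivative \<phi>' x) (at x within {1..}) \<and> \<phi>' x / \<phi> x \<le> \<beta> / x"
    using assms(1) unfolding admissible_def by blast
  let ?S = "(\<lambda>q. \<phi> q * exp (- x / q)) ` {q\<^sub>0..}"
  have bdd: "bdd_below ?S"
  proof (rule bdd_belowI[of _ 0])
    fix y assume "y \<in> ?S"
    then obtain q where "q \<ge> q\<^sub>0" "y = \<phi> q * exp (- x / q)" by auto
    moreover have "\<phi> q \<ge> 1" using pos \<open>q \<ge> q\<^sub>0\<close> assms(2) by auto
    ultimately show "0 \<le> y" by simp
  qed
  show ?thesis
  proof (cases "x \<ge> 0")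
    case True
    have "Inf ?S \<le> \<phi> q\<^sub>0 * exp (- x / q\<^sub>0)"
      by (rule cInf_lower[OF _ bdd]) auto
    thus ?thesis using True by simp
  next
    case False
    define q where "q = q\<^sub>0 * (1 - x)"
    have qq: "q \<ge> q\<^sub>0" unfolding q_def using False assms(2) by (simp add: mult_le_cancel_left1)
    have "Inf ?S \<le> \<phi> q * exp (- x / q)"
      by (rule cInf_lower[OF _ bdd]) (use qq in auto)
    also have "\<dots> \<le> (q\<^sub>0 powr \<beta> * \<phi> (1 - x)) * exp (1 / q\<^sub>0)"
    proof (rule mult_mono)
      show "\<phi> q \<le> q\<^sub>0 powr \<beta> * \<phi> (1 - x)" unfolding q_def
        by (rule phi_scale[OF pos der assms(2)]) (use False in simp)
      have "- x / q = (-x / (1 - x)) / q\<^sub>0" unfolding q_def by simp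
      also have "\<dots> \<le> 1 / q\<^sub>0"
        using False assms(2) by (intro divide_right_mono) (auto simp: divide_simps)
      finally show "exp (- x / q) \<le> exp (1 / q\<^sub>0)" by simp
      show "0 \<le> q\<^sub>0 powr \<beta> * \<phi> (1 - x)" using pos False by (simp add: order_trans[OF zero_le_one])
    qed simp
    finally show ?thesis using False by (simp add: mult_ac)
  qed
qed

end
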